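(* Let $n=2k$ with $k\ge1$, let $\lambda\in\mathbb{F}_{2^n}$ and $f(x)=Tr(\lambda x^{2^k+1})$ for $x\in\mathbb{F}_{2^n}$. Then $f$ is negabent if and only if $\lambda+\lambda^{2^k}\neq 1$. Moreover, $f$ is bent-negabent if and only if $\lambda+\lambda^{2^k}\notin\mathbb{F}_2$.
   Context: $Tr=Tr_1^n$ is the absolute trace $\mathbb{F}_{2^n}\to\mathbb{F}_2$. Fix a self-dual basis of $\mathbb{F}_{2^n}$ over $\mathbb{F}_2$ (basis $\{\alpha_i\}$ with $Tr(\alpha_i\alpha_j)=\delta_{ij}$), identify $\mathbb{F}_{2^n}$ with $\mathbb{F}_2^n$ via coordinates, and let $wt(x)$ be the number of nonzero coordinates of $x$. For $g:\mathbb{F}_{2^n}\to\mathbb{F}_2$: $g$ is bent if $\left|\sum_x(-1)^{g(x)+Tr(\mu x)}\right|=2^{n/2}$ for all $\mu$; $g$ is negabent if $\left|\sum_x(-1)^{g(x)+Tr(\mu x)}\mathrm{i}^{wt(x)}\right|=2^{n/2}$ for all $\mu$ ($\mathrm{i}=\sqrt{-1}$); bent-negabent means both. *)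

theory Defs
  imports Complex_Main
begin

text \<open>The finite field F_(2^n) is modelled as an arbitrary finite field type 'a
  with CARD('a) = 2^n (hence characteristic 2).  F_2 is the prime subfield {0,1}.\<close>

definition tr :: "nat \<Rightarrow> 'a::field \<Rightarrow> 'a" where
  "tr n x = (\<Sum>i<n. x ^ (2 ^ i))"

definition sgn2 :: "'a::field \<Rightarrow> complex" where
  "sgn2 y = (if y = 0 then 1 else -1)"

definition self_dual_basis :: "nat \<Rightarrow> (nat \<Rightarrow> 'a::field) \<Rightarrow> bool" where
  "self_dual_basis n \<alpha> \<longleftrightarrow>
     (\<forall>i<n. \<forall>j<n. tr n (\<alpha> i * \<alpha> j) = (if i = j then 1 else 0))"

text \<open>Coordinates of x w.r.t. a self-dual basis are tr n (alpha i * x); wt counts the nonzero ones.\<close>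
definition wt :: "nat \<Rightarrow> (nat \<Rightarrow> 'a::field) \<Rightarrow> 'a \<Rightarrow> nat" where
  "wt n \<alpha> x = card {i. i < n \<and> tr n (\<alpha> i * x) \<noteq> 0}"

definition bent :: "nat \<Rightarrow> ('a::{field,finite} \<Rightarrow> 'a) \<Rightarrow> bool" where
  "bent n g \<longleftrightarrow>
     (\<forall>\<mu>. cmod (\<Sum>x\<in>UNIV. sgn2 (g x + tr n (\<mu> * x))) = 2 powr (real n / 2))"

definition negabent :: "nat \<Rightarrow> (nat \<Rightarrow> 'a::{field,finite}) \<Rightarrow> ('a \<Rightarrow> 'a) \<Rightarrow> bool" where
  "negabent n \<alpha> g \<longleftrightarrow>
     (\<forall>\<mu>. cmod (\<Sum>x\<in>UNIV. sgn2 (g x + tr n (\<mu> * x)) * \<i> ^ wt n \<alpha> x) = 2 powr (real n / 2))"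

end

theory Submission imports Defs "HOL-Number_Theory.Residues" "HOL-Computational_Algebra.Primes"
begin

lemma char2:
  assumes "card (UNIV :: 'a::{field,finite} set) = 2 ^ n" "n \<ge> 1"
  shows "(2::'a) = 0"
proof -
  have pos: "CHAR('a) > 0" by (rule finite_imp_CHAR_pos) simp
  have pr: "prime CHAR('a)" using prime_CHAR_semidom[OF pos] .
  have "CHAR('a) dvd 2 ^ n" using CHAR_dvd_CARD[where 'a='a] assms(1) by simp
  then have "CHAR('a) dvd 2" using pr prime_dvd_power by blast
  then have "CHAR('a) = 2" using pr primes_dvd_imp_eq[OF pr two_is_prime_nat] by blast 
  then show ?thesis by (metis of_nat_CHAR of_nat_numeral)
qed

lemma power_card_same:
  fixes x :: "'a :: {field,finite}"
  shows   "x ^ card (UNIV :: 'a set) = x"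
proof (cases "x = 0")
  case False
  have "x * (\<Prod>y\<in>UNIV-{0}. x * y) = x * x ^ (card (UNIV :: 'a set) - 1) * \<Prod>(UNIV-{0})"
    by (simp add: prod.distrib mult_ac)
  also have "x * x ^ (card (UNIV :: 'a set) - 1) = x ^ Suc (card (UNIV :: 'a set) - 1)"
    by (subst power_Suc) auto
  also have "Suc (card (UNIV :: 'a set) - 1) = card (UNIV :: 'a set)"
    using finite_UNIV_card_ge_0[where ?'a = 'a] by simp
  also have "(\<Prod>y\<in>UNIV-{0}. x * y) = (\<Prod>y\<in>UNIV-{0}. y)"
    by (rule prod.reindex_bij_witness[of _ "\<lambda>y. y / x" "\<lambda>y. x * y"]) (use False in auto)
  finally show ?thesis
    by simp
qed (use finite_UNIV_card_ge_0[where ?'a = 'a] in auto)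


lemma sum_split_add: "(\<Sum>i<m+k. f i) = (\<Sum>i<m. f i) + (\<Sum>i<k. f (m+i))"
  for f :: "nat \<Rightarrow> 'b::comm_monoid_add"
  by (induction k) (simp_all add: add.assoc)

lemma ring_e1: "lam*((A+Y)*(a+y)) + \<mu>*(a+y) + (lam*(Y*y) + \<mu>*y) + ((a+y)*y + y) + (lam*(A*a) + \<mu>*a + y*((lam+L)*A + a))
     = lam*a*Y + L*A*y + y*y + y + 2*(lam*A*a + lam*A*y + lam*Y*y + \<mu>*a + \<mu>*y + a*y)" for a :: "'a::field"
    by (simp add: algebra_simps)
lemma ring_e2: "lam*((A+Y)*(a+y)) + \<mu>*(a+y) + (lam*(Y*y) + \<mu>*y) + (lam*(A*a) + \<mu>*a + y*((lam+L)*A))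
     = lam*a*Y + L*A*y + 2*(lam*A*a + lam*A*y + lam*Y*y + \<mu>*a + \<mu>*y)" for a :: "'a::field"
    by (simp add: algebra_simps)

locale sd =
  fixes n k :: nat and \<alpha> :: "nat \<Rightarrow> 'a::{field,finite}"
  assumes card: "card (UNIV::'a set) = 2^n" and nk: "n = 2*k" and k1: "k \<ge> 1"
    and sdb: "self_dual_basis n \<alpha>"
begin

lemma n1: "n \<ge> 1" using nk k1 by simp

lemma two0: "(2::'a) = 0" using char2[OF card n1] .

lemma add_self[simp]: "(x::'a) + x = 0"
  using two0 by (metis mult_2 mult_zero_left)

lemma minus_id[simp]: "- (x::'a) = x"
  using add_self by (metis add_eq_0_iff)

lemma fermat: "(x::'a) ^ (2^n) = x" using power_card_same[of x] card by simp

lemma frob2: "((x::'a) + y)^2 = x^2 + y^2"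
proof -
  have "(x+y)^2 = x^2 + y^2 + 2*x*y" by (simp add: power2_eq_square algebra_simps)
  then show ?thesis using two0 by simp
qed

lemma frob: "((x::'a) + y)^(2^i) = x^(2^i) + y^(2^i)"
proof (induction i)
  case (Suc i)
  have "(x+y)^(2^Suc i) = ((x+y)^(2^i))^2" by (simp add: power_mult[symmetric] mult.commute)
  also have "\<dots> = (x^(2^i))^2 + (y^(2^i))^2" using Suc frob2 by simp
  finally show ?case by (simp add: power_mult[symmetric] mult.commute)
qed simp

lemma frob_sum: "(\<Sum>i\<in>A. f i :: 'a)^2 = (\<Sum>i\<in>A. (f i)^2)"
proof (induction A rule: infinite_finite_induct)
  case (insert x F) then show ?case using frob2 by simp
qed simp_all

lemma tr_add: "tr n (x + y) = tr n x + tr n (y::'a)"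
  unfolding tr_def by (simp add: frob sum.distrib)

lemma tr_zero[simp]: "tr n (0::'a) = 0"
  unfolding tr_def by (simp add: zero_power)

lemma tr_sum: "tr n (\<Sum>i\<in>A. f i :: 'a) = (\<Sum>i\<in>A. tr n (f i))"
proof (induction A rule: infinite_finite_induct)
  case (insert x F) then show ?case using tr_add by simp
qed simp_all

lemma tr_sq: "tr n ((x::'a)^2) = tr n x"
proof -
  define f where "f i = x^(2^i)" for i
  have "tr n (x^2) = (\<Sum>i<n. f (Suc i))"
    unfolding tr_def f_def by (simp add: power_mult[symmetric] mult.commute)
  moreover have "(\<Sum>i<Suc n. f i) = f 0 + (\<Sum>i<n. f (Suc i))" by (rule sum.lessThan_Suc_shift)
  moreover have "(\<Sum>i<Suc n. f i) = (\<Sum>i<n. f i) + f n" by simp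
  moreover have "f n = f 0" unfolding f_def using fermat by simp
  ultimately show ?thesis unfolding tr_def f_def[symmetric] by (simp add: add.commute)
qed

lemma tr_pow2: "tr n ((x::'a)^(2^j)) = tr n x"
proof (induction j)
  case (Suc j)
  have "x^(2^Suc j) = (x^(2^j))^2" by (simp add: power_mult[symmetric] mult.commute)
  then show ?case using Suc tr_sq by simp
qed simp

lemma tr_idem: "(tr n (x::'a))^2 = tr n x"
proof -
  have "(tr n x)^2 = (\<Sum>i<n. (x^2)^(2^i))"
    unfolding tr_def frob_sum by (simp add: power_mult[symmetric] mult.commute)
  also have "\<dots> = tr n x" using tr_sq unfolding tr_def by simp
  finally show ?thesis .
qed

lemma tr01: "tr n (x::'a) = 0 \<or> tr n x = 1"
proof -
  have "tr n x * (tr n x - 1) = 0" using tr_idem[of x] by (simp add: power2_eq_square algebra_simps)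
  then show ?thesis by simp
qed

lemma tr_ne0: "tr n (x::'a) \<noteq> 0 \<longleftrightarrow> tr n x = 1" using tr01[of x] by auto

definition psi :: "'a \<Rightarrow> complex" where "psi z = sgn2 (tr n z)"

lemma sgn2_add: "sgn2 (tr n x + tr n (y::'a)) = sgn2 (tr n x) * sgn2 (tr n y)"
  using tr01[of x] tr01[of y] by (auto simp: sgn2_def)

lemma psi_add: "psi (x + y) = psi x * psi y"
  unfolding psi_def tr_add sgn2_add ..

lemma psi_sq[simp]: "psi x * psi x = 1"
  unfolding psi_def sgn2_def by simp

lemma psi_cnj[simp]: "cnj (psi x) = psi x"
  unfolding psi_def sgn2_def by simp

lemma psi_ne0[simp]: "psi x \<noteq> 0"
  unfolding psi_def sgn2_def by simp

lemma psi0[simp]: "psi 0 = 1" unfolding psi_def sgn2_def by simp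

lemma tr_aa: "tr n (\<alpha> 0 * \<alpha> 0) = 1"
  using sdb n1 unfolding self_dual_basis_def by auto

lemma psi_sum: "(\<Sum>\<mu>\<in>UNIV. psi (\<mu> * b)) = (if b = 0 then 2^n else 0)"
proof (cases "b = 0")
  case True then show ?thesis using card by simp
next
  case False
  define c where "c = \<alpha> 0 * \<alpha> 0 / b"
  have cb: "psi (c * b) = -1" unfolding c_def psi_def sgn2_def using False tr_aa by simp
  have "(\<Sum>\<mu>\<in>UNIV. psi (\<mu> * b)) = (\<Sum>\<mu>\<in>UNIV. psi ((\<mu> + c) * b))"
    by (rule sum.reindex_bij_witness[of _ "\<lambda>\<mu>. \<mu> + c" "\<lambda>\<mu>. \<mu> + c"]) (auto simp: add.assoc)
  also have "\<dots> = - (\<Sum>\<mu>\<in>UNIV. psi (\<mu> * b))"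
    by (simp add: distrib_right psi_add cb sum_negf)
  finally show ?thesis using False by simp
qed

definition crd :: "'a \<Rightarrow> nat set" where "crd x = {i. i < n \<and> tr n (\<alpha> i * x) \<noteq> 0}"
definition E :: "nat set \<Rightarrow> 'a" where "E S = (\<Sum>j\<in>S. \<alpha> j)"

lemma crd_sub: "crd x \<subseteq> {..<n}" unfolding crd_def by auto
lemma finite_crd[simp]: "finite (crd x)" using crd_sub finite_subset by blast

lemma tr_E: assumes "S \<subseteq> {..<n}" "i < n"
  shows "tr n (\<alpha> i * E S) = (if i \<in> S then 1 else 0)"
proof -
  have fS: "finite S" using assms(1) finite_subset by blast
  have "tr n (\<alpha> i * E S) = (\<Sum>j\<in>S. tr n (\<alpha> i * \<alpha> j))"
    unfolding E_def sum_distrib_left tr_sum ..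
  also have "\<dots> = (\<Sum>j\<in>S. if i = j then 1 else 0)"
    using sdb assms unfolding self_dual_basis_def by (intro sum.cong) auto
  also have "\<dots> = (if i \<in> S then 1 else 0)" using fS by simp
  finally show ?thesis .
qed

lemma crd_E: assumes "S \<subseteq> {..<n}" shows "crd (E S) = S"
proof -
  have "i \<in> crd (E S) \<longleftrightarrow> i \<in> S" for i
    using tr_E[OF assms, of i] assms by (cases "i < n") (auto simp: crd_def)
  then show ?thesis by blast
qed

lemma E_surj: "E ` Pow {..<n} = UNIV"
proof -
  have inj: "inj_on E (Pow {..<n})" by (rule inj_onI) (metis PowD crd_E)
  have "card (E ` Pow {..<n}) = 2^n" using card_image[OF inj] by (simp add: card_Pow)
  then show ?thesis using card by (metis card_subset_eq finite_UNIV subset_UNIV)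
qed

lemma expand: "x = E (crd x)"
proof -
  obtain S where "S \<subseteq> {..<n}" "x = E S" using E_surj by (metis PowD UNIV_I imageE)
  then show ?thesis using crd_E by simp
qed

lemma tr_mul_crd: "tr n (x * y) = of_nat (card (crd x \<inter> crd y))"
proof -
  have "tr n (x * y) = tr n (E (crd x) * y)" using expand[of x] by simp
  also have "\<dots> = (\<Sum>j\<in>crd x. tr n (\<alpha> j * y))"
    unfolding E_def sum_distrib_right tr_sum by simp
  also have "\<dots> = (\<Sum>j\<in>crd x. if j \<in> crd y then 1 else 0)"
    using crd_sub tr01 by (intro sum.cong) (auto simp: crd_def)
  also have "\<dots> = of_nat (card (crd x \<inter> crd y))"
    by (simp add: sum.If_cases Int_def)
  finally show ?thesis .
qed

lemma tr_crd: "tr n x = of_nat (card (crd x))"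
  using tr_mul_crd[of x x] tr_sq[of x] by (simp add: power2_eq_square)

lemma crd_add: "crd (x + y) = (crd x - crd y) \<union> (crd y - crd x)"
proof -
  have "i \<in> crd (x + y) \<longleftrightarrow> i \<in> (crd x - crd y) \<union> (crd y - crd x)" for i
    unfolding crd_def distrib_left tr_add using tr01[of "\<alpha> i * x"] tr01[of "\<alpha> i * y"] by auto
  then show ?thesis by blast
qed

lemma crd0[simp]: "crd 0 = {}" unfolding crd_def by simp

lemma of_nat_char2: "(of_nat m :: 'a) = (if even m then 0 else 1)"
  by (induction m) auto

lemma sgn2_of_nat: "sgn2 (of_nat m :: 'a) = (-1)^m"
  unfolding of_nat_char2 sgn2_def by simp

lemma wt_crd: "wt n \<alpha> x = card (crd x)" unfolding wt_def crd_def ..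

lemma i_identity: "\<i> ^ wt n \<alpha> x * cnj (\<i> ^ wt n \<alpha> y) = \<i> ^ wt n \<alpha> (x + y) * psi (x * y + y)"
proof -
  define A where "A = crd x" define B where "B = crd y"
  define a where "a = card (A - B)" define b where "b = card (B - A)" define c where "c = card (A \<inter> B)"
  have fA: "finite A" "finite B" unfolding A_def B_def by simp_all
  have cA: "card A = a + c"
  proof -
    have "card ((A - B) \<union> (A \<inter> B)) = card (A - B) + card (A \<inter> B)"
      using fA by (intro card_Un_disjoint) auto
    moreover have "(A - B) \<union> (A \<inter> B) = A" by blast
    ultimately show ?thesis unfolding a_def c_def by simp
  qed
  have cB: "card B = b + c"
  proof -
    have "card ((B - A) \<union> (A \<inter> B)) = card (B - A) + card (A \<inter> B)"
      using fA by (intro card_Un_disjoint) auto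
    moreover have "(B - A) \<union> (A \<inter> B) = B" by blast
    ultimately show ?thesis unfolding b_def c_def by simp
  qed
  have cAB: "card ((A - B) \<union> (B - A)) = a + b" unfolding a_def b_def using fA
    by (intro card_Un_disjoint) auto
  have ps: "psi (x * y + y) = (-1)^c * (-1)^(b+c)"
    unfolding psi_add unfolding psi_def tr_mul_crd unfolding tr_crd sgn2_of_nat A_def[symmetric] B_def[symmetric]
      c_def[symmetric] cB by simp
  have ic: "\<i>^c * \<i>^c = (-1::complex)^c" by (simp add: power_mult_distrib[symmetric])
  have mc: "(-1::complex)^c * (-1)^c = 1" by (simp add: power_mult_distrib[symmetric])
  have "\<i> ^ wt n \<alpha> x * cnj (\<i> ^ wt n \<alpha> y) = \<i>^(a+c) * (-\<i>)^(b+c)"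
    unfolding wt_crd A_def[symmetric] B_def[symmetric] cA cB by simp
  also have "\<dots> = \<i>^(a+b) * (\<i>^c * \<i>^c) * (-1)^(b+c)"
    by (simp only: power_minus[of \<i>] power_add mult_ac)
  also have "\<dots> = \<i>^(a+b) * (-1)^c * (-1)^(b+c)" unfolding ic ..
  also have "\<dots> = \<i> ^ wt n \<alpha> (x + y) * psi (x * y + y)"
    unfolding ps wt_crd crd_add A_def[symmetric] B_def[symmetric] cAB by simp
  finally show ?thesis .
qed

lemma double_sum:
  fixes f :: "'a \<Rightarrow> complex" and G :: "'a \<Rightarrow> complex" and D :: "'a \<Rightarrow> 'a"
  assumes h: "\<And>a y. f (a + y) * cnj (f y) = G a * psi (y * D a)"
  shows "(\<Sum>x\<in>UNIV. f x) * cnj (\<Sum>x\<in>UNIV. f x) = (\<Sum>a\<in>UNIV. if D a = 0 then 2^n * G a else 0)"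
proof -
  have "(\<Sum>x\<in>UNIV. f x) * cnj (\<Sum>x\<in>UNIV. f x) = (\<Sum>x\<in>UNIV. \<Sum>y\<in>UNIV. f x * cnj (f y))"
    by (simp add: sum_product)
  also have "\<dots> = (\<Sum>y\<in>UNIV. \<Sum>x\<in>UNIV. f x * cnj (f y))"
    by (rule sum.swap)
  also have "\<dots> = (\<Sum>y\<in>UNIV. \<Sum>a\<in>UNIV. f (a + y) * cnj (f y))"
  proof (rule sum.cong[OF refl])
    fix y
    show "(\<Sum>x\<in>UNIV. f x * cnj (f y)) = (\<Sum>a\<in>UNIV. f (a + y) * cnj (f y))"
      by (rule sum.reindex_bij_witness[of _ "\<lambda>x. x + y" "\<lambda>a. a + y"]) (auto simp: add.assoc)
  qed
  also have "\<dots> = (\<Sum>y\<in>UNIV. \<Sum>a\<in>UNIV. G a * psi (y * D a))" by (simp add: h)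
  also have "\<dots> = (\<Sum>a\<in>UNIV. \<Sum>y\<in>UNIV. G a * psi (y * D a))"
    by (rule sum.swap)
  also have "\<dots> = (\<Sum>a\<in>UNIV. G a * (\<Sum>y\<in>UNIV. psi (y * D a)))"
    by (simp add: sum_distrib_left)
  also have "\<dots> = (\<Sum>a\<in>UNIV. if D a = 0 then 2^n * G a else 0)"
    unfolding psi_sum by (intro sum.cong) auto
  finally show ?thesis .
qed

lemma qq: "((y::'a)^(2^k))^(2^k) = y"
  using fermat[of y] nk by (simp add: power_mult[symmetric] power_add[symmetric] mult_2)

lemma tr_swap: "tr n (l * a * (y::'a)^(2^k)) = tr n (l^(2^k) * a^(2^k) * y)"
proof -
  have "tr n (l * a * y^(2^k)) = tr n ((l * a * y^(2^k))^(2^k))" using tr_pow2 by simp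
  also have "(l * a * y^(2^k))^(2^k) = l^(2^k) * a^(2^k) * y" by (simp add: power_mult_distrib qq)
  finally show ?thesis .
qed

lemma psi_eqI: "tr n (x + y) = 0 \<Longrightarrow> psi x = psi y"
  unfolding psi_def tr_add by (metis add_eq_0_iff minus_id)

lemma key_neg:
  fixes lam \<mu> a y :: 'a
  defines "Q \<equiv> \<lambda>x. lam * x^(2^k+1)"
  shows "psi (Q (a+y) + \<mu>*(a+y)) * psi (Q y + \<mu>*y) * psi ((a+y)*y + y)
     = psi (Q a + \<mu>*a) * psi (y * ((lam + lam^(2^k)) * a^(2^k) + a))"
proof -
  define A where "A = a^(2^k)" define Y where "Y = y^(2^k)" define L where "L = lam^(2^k)"
  have QQ: "Q (a+y) = lam*((A+Y)*(a+y))" "Q y = lam*(Y*y)" "Q a = lam*(A*a)"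
    unfolding Q_def A_def Y_def by (simp_all add: frob two0)
  have e: "lam*((A+Y)*(a+y)) + \<mu>*(a+y) + (lam*(Y*y) + \<mu>*y) + ((a+y)*y + y) + (lam*(A*a) + \<mu>*a + y*((lam+L)*A + a))
     = lam*a*Y + L*A*y + y*y + y + 2*(lam*A*a + lam*A*y + lam*Y*y + \<mu>*a + \<mu>*y + a*y)"
    by (rule ring_e1)
  have "tr n (lam*a*Y + L*A*y + y*y + y) = 0"
    unfolding tr_add Y_def L_def A_def tr_swap using tr_sq[of y] by (simp add: power2_eq_square)
  then have "tr n (lam*((A+Y)*(a+y)) + \<mu>*(a+y) + (lam*(Y*y) + \<mu>*y) + ((a+y)*y + y) + (lam*(A*a) + \<mu>*a + y*((lam+L)*A + a))) = 0"
    unfolding e two0 by simp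
  then have "psi (lam*((A+Y)*(a+y)) + \<mu>*(a+y) + (lam*(Y*y) + \<mu>*y) + ((a+y)*y + y)) = psi (lam*(A*a) + \<mu>*a + y*((lam+L)*A + a))"
    by (rule psi_eqI)
  then show ?thesis unfolding QQ psi_add[symmetric] A_def[symmetric] L_def[symmetric] by simp
qed

lemma key_bent:
  fixes lam \<mu> a y :: 'a
  defines "Q \<equiv> \<lambda>x. lam * x^(2^k+1)"
  shows "psi (Q (a+y) + \<mu>*(a+y)) * psi (Q y + \<mu>*y)
     = psi (Q a + \<mu>*a) * psi (y * ((lam + lam^(2^k)) * a^(2^k)))"
proof -
  define A where "A = a^(2^k)" define Y where "Y = y^(2^k)" define L where "L = lam^(2^k)"
  have QQ: "Q (a+y) = lam*((A+Y)*(a+y))" "Q y = lam*(Y*y)" "Q a = lam*(A*a)"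
    unfolding Q_def A_def Y_def by (simp_all add: frob two0)
  have e: "lam*((A+Y)*(a+y)) + \<mu>*(a+y) + (lam*(Y*y) + \<mu>*y) + (lam*(A*a) + \<mu>*a + y*((lam+L)*A))
     = lam*a*Y + L*A*y + 2*(lam*A*a + lam*A*y + lam*Y*y + \<mu>*a + \<mu>*y)"
    by (rule ring_e2)
  have "tr n (lam*a*Y + L*A*y) = 0"
    unfolding tr_add Y_def L_def A_def tr_swap by simp
  then have "tr n (lam*((A+Y)*(a+y)) + \<mu>*(a+y) + (lam*(Y*y) + \<mu>*y) + (lam*(A*a) + \<mu>*a + y*((lam+L)*A))) = 0"
    unfolding e two0 by simp
  then have "psi (lam*((A+Y)*(a+y)) + \<mu>*(a+y) + (lam*(Y*y) + \<mu>*y)) = psi (lam*(A*a) + \<mu>*a + y*((lam+L)*A))"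
    by (rule psi_eqI)
  then show ?thesis unfolding QQ psi_add[symmetric] A_def[symmetric] L_def[symmetric] by simp
qed

lemma sgn2_tr: "sgn2 (tr n u + tr n v) = psi (u + v)"
  unfolding psi_def tr_add ..

lemma NN:
  fixes lam \<mu> :: 'a
  defines "N \<equiv> (\<Sum>x\<in>UNIV. sgn2 (tr n (lam * x ^ (2 ^ k + 1)) + tr n (\<mu> * x)) * \<i> ^ wt n \<alpha> x)"
  shows "N * cnj N = (\<Sum>a\<in>UNIV. if (lam + lam^(2^k)) * a^(2^k) + a = 0
            then 2^n * (psi (lam * a ^ (2 ^ k + 1) + \<mu> * a) * \<i> ^ wt n \<alpha> a) else 0)"
  unfolding N_def sgn2_tr
proof (rule double_sum)
  fix a y :: 'a
  have ay: "a + y + y = a" by (simp add: add.assoc)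
  have "\<i> ^ wt n \<alpha> (a + y) * cnj (\<i> ^ wt n \<alpha> y) = \<i> ^ wt n \<alpha> a * psi ((a + y) * y + y)"
    using i_identity[of "a+y" y] unfolding ay .
  then show "psi (lam * (a + y) ^ (2 ^ k + 1) + \<mu> * (a + y)) * \<i> ^ wt n \<alpha> (a + y) *
         cnj (psi (lam * y ^ (2 ^ k + 1) + \<mu> * y) * \<i> ^ wt n \<alpha> y) =
         psi (lam * a ^ (2 ^ k + 1) + \<mu> * a) * \<i> ^ wt n \<alpha> a *
         psi (y * ((lam + lam ^ 2 ^ k) * a ^ 2 ^ k + a))"
  proof -
    have kn: "psi (lam * (a + y) ^ (2 ^ k + 1) + \<mu> * (a + y)) * psi (lam * y ^ (2 ^ k + 1) + \<mu> * y) * psi ((a+y)*y + y)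
     = psi (lam * a ^ (2 ^ k + 1) + \<mu> * a) * psi (y * ((lam + lam^(2^k)) * a^(2^k) + a))"
      using key_neg[of lam a y \<mu>] by (simp only:)
    have "psi (lam * (a + y) ^ (2 ^ k + 1) + \<mu> * (a + y)) * \<i> ^ wt n \<alpha> (a + y) *
         cnj (psi (lam * y ^ (2 ^ k + 1) + \<mu> * y) * \<i> ^ wt n \<alpha> y)
       = psi (lam * (a + y) ^ (2 ^ k + 1) + \<mu> * (a + y)) * psi (lam * y ^ (2 ^ k + 1) + \<mu> * y)
         * (\<i> ^ wt n \<alpha> (a + y) * cnj (\<i> ^ wt n \<alpha> y))"
      by (simp only: complex_cnj_mult psi_cnj mult_ac)
    also have "\<dots> = psi (lam * (a + y) ^ (2 ^ k + 1) + \<mu> * (a + y)) * psi (lam * y ^ (2 ^ k + 1) + \<mu> * y)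
         * (\<i> ^ wt n \<alpha> a * psi ((a + y) * y + y))" unfolding \<open>\<i> ^ wt n \<alpha> (a + y) * cnj (\<i> ^ wt n \<alpha> y) = \<i> ^ wt n \<alpha> a * psi ((a + y) * y + y)\<close> ..
    also have "\<dots> = (psi (lam * (a + y) ^ (2 ^ k + 1) + \<mu> * (a + y)) * psi (lam * y ^ (2 ^ k + 1) + \<mu> * y) * psi ((a+y)*y + y)) * \<i> ^ wt n \<alpha> a"
      by (simp only: mult_ac)
    also have "\<dots> = psi (lam * a ^ (2 ^ k + 1) + \<mu> * a) * \<i> ^ wt n \<alpha> a * psi (y * ((lam + lam^(2^k)) * a^(2^k) + a))"
      unfolding kn by (simp only: mult_ac)
    finally show ?thesis .
  qed
qed

lemma WW:
  fixes lam \<mu> :: 'a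
  defines "W \<equiv> (\<Sum>x\<in>UNIV. sgn2 (tr n (lam * x ^ (2 ^ k + 1)) + tr n (\<mu> * x)))"
  shows "W * cnj W = (\<Sum>a\<in>UNIV. if (lam + lam^(2^k)) * a^(2^k) = 0
            then 2^n * psi (lam * a ^ (2 ^ k + 1) + \<mu> * a) else 0)"
  unfolding W_def sgn2_tr
proof (rule double_sum)
  fix a y :: 'a
  show "psi (lam * (a + y) ^ (2 ^ k + 1) + \<mu> * (a + y)) *
         cnj (psi (lam * y ^ (2 ^ k + 1) + \<mu> * y)) =
         psi (lam * a ^ (2 ^ k + 1) + \<mu> * a) *
         psi (y * ((lam + lam ^ 2 ^ k) * a ^ 2 ^ k))"
    using key_bent[of lam a y \<mu>] by (simp only: psi_cnj)
qed

lemma cmod_iff: "cmod z = 2 powr (real n / 2) \<longleftrightarrow> z * cnj z = 2^n"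
proof -
  have p: "2 powr (real n / 2) = (2::real)^k" using nk by (simp add: powr_realpow)
  have "z * cnj z = of_real ((cmod z)^2)" using complex_norm_square by simp
  moreover have "(2::complex)^n = of_real ((2^k)^2)" using nk by (simp add: power_mult[symmetric] mult.commute)
  ultimately have "z * cnj z = 2^n \<longleftrightarrow> (cmod z)^2 = (2^k)^2" by (metis of_real_eq_iff)
  also have "\<dots> \<longleftrightarrow> cmod z = 2^k" by (simp add: power2_eq_iff_nonneg)
  finally show ?thesis using p by simp
qed

lemma c_fix: "(lam + lam^(2^k))^(2^k) = lam + (lam::'a)^(2^k)"
  by (simp add: frob qq add.commute)

lemma eq_of_add0: "(x::'a) + y = 0 \<Longrightarrow> x = y"
  by (metis add_eq_0_iff minus_id)

lemma D_zero:
  assumes "lam + lam^(2^k) \<noteq> (1::'a)" "(lam + lam^(2^k)) * a^(2^k) + a = 0"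
  shows "a = 0"
proof (rule ccontr)
  assume a0: "a \<noteq> 0"
  define c where "c = lam + lam^(2^k)"
  have 1: "c * a^(2^k) = a" using assms(2) eq_of_add0 unfolding c_def by blast
  have "a^(2^k) = (c * a^(2^k))^(2^k)" using 1 by simp
  also have "\<dots> = c * a" using c_fix unfolding c_def by (simp add: power_mult_distrib qq)
  finally have "a = c * (c * a)" using 1 by simp
  then have "(c*c - 1) * a = 0" by (simp add: algebra_simps)
  then have "c * c = 1" using a0 by simp
  then have "(c + 1)^2 = 0" using frob2[of c 1] by (simp add: power2_eq_square)
  then have "c = 1" using eq_of_add0 by simp
  then show False using assms(1) unfolding c_def by simp
qed

lemma negabent_iff: "negabent n \<alpha> (\<lambda>x. tr n (lam * x ^ (2 ^ k + 1))) \<longleftrightarrow> lam + lam^(2^k) \<noteq> (1::'a)"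
proof
  assume c1: "lam + lam^(2^k) \<noteq> 1"
  show "negabent n \<alpha> (\<lambda>x. tr n (lam * x ^ (2 ^ k + 1)))"
    unfolding negabent_def cmod_iff
  proof
    fix \<mu> :: 'a
    have "(\<Sum>a\<in>UNIV. if (lam + lam^(2^k)) * a^(2^k) + a = 0
            then 2^n * (psi (lam * a ^ (2 ^ k + 1) + \<mu> * a) * \<i> ^ wt n \<alpha> a) else 0)
        = (\<Sum>a\<in>UNIV. if a = (0::'a) then (2::complex)^n else 0)"
    proof (intro sum.cong refl)
      fix a :: 'a
      have Dz: "(lam + lam^(2^k)) * a^(2^k) + a = 0 \<longleftrightarrow> a = 0"
        using D_zero[OF c1, of a] by (auto simp: zero_power)
      show "(if (lam + lam^(2^k)) * a^(2^k) + a = 0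
            then 2^n * (psi (lam * a ^ (2 ^ k + 1) + \<mu> * a) * \<i> ^ wt n \<alpha> a) else 0)
          = (if a = (0::'a) then (2::complex)^n else 0)"
        unfolding Dz by (simp add: wt_crd zero_power)
    qed
    then show "(\<Sum>x\<in>UNIV. sgn2 (tr n (lam * x ^ (2 ^ k + 1)) + tr n (\<mu> * x)) * \<i> ^ wt n \<alpha> x) *
          cnj (\<Sum>x\<in>UNIV. sgn2 (tr n (lam * x ^ (2 ^ k + 1)) + tr n (\<mu> * x)) * \<i> ^ wt n \<alpha> x) = 2 ^ n"
      unfolding NN by simp
  qed
next
  assume neg: "negabent n \<alpha> (\<lambda>x. tr n (lam * x ^ (2 ^ k + 1)))"
  show "lam + lam^(2^k) \<noteq> 1"
  proof
    assume c1: "lam + lam^(2^k) = 1"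
    define P where "P \<mu> = (\<Sum>a\<in>UNIV. if (lam + lam^(2^k)) * a^(2^k) + a = 0
            then 2^n * (psi (lam * a ^ (2 ^ k + 1) + \<mu> * a) * \<i> ^ wt n \<alpha> a) else (0::complex))" for \<mu>
    have P: "P \<mu> = 2^n" for \<mu>
      using neg unfolding negabent_def cmod_iff P_def NN by blast
    have ne: "a + 1 = 0 \<longleftrightarrow> a = 1" for a :: 'a using eq_of_add0 by auto
    have z: "(\<Sum>\<mu>\<in>UNIV. P \<mu> * psi (\<mu> * 1)) = 0"
      unfolding P sum_distrib_left[symmetric] psi_sum by simp
    have "(\<Sum>\<mu>\<in>UNIV. P \<mu> * psi (\<mu> * 1))
        = (\<Sum>\<mu>\<in>UNIV. \<Sum>a\<in>UNIV. if a^(2^k) + a = 0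
            then 2^n * (psi (lam * a ^ (2 ^ k + 1)) * \<i> ^ wt n \<alpha> a) * psi (\<mu> * (a + 1)) else 0)"
      unfolding P_def c1 sum_distrib_right
      by (intro sum.cong refl) (simp add: psi_add distrib_left mult_ac)
    also have "\<dots> = (\<Sum>a\<in>UNIV. \<Sum>\<mu>\<in>UNIV. if a^(2^k) + a = 0
            then 2^n * (psi (lam * a ^ (2 ^ k + 1)) * \<i> ^ wt n \<alpha> a) * psi (\<mu> * (a + 1)) else 0)"
      by (rule sum.swap)
    also have "\<dots> = (\<Sum>a\<in>UNIV. if a^(2^k) + a = 0
            then 2^n * (psi (lam * a ^ (2 ^ k + 1)) * \<i> ^ wt n \<alpha> a) * (\<Sum>\<mu>\<in>UNIV. psi (\<mu> * (a + 1))) else 0)"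
      by (intro sum.cong refl) (simp add: sum_distrib_left)
    also have "\<dots> = (\<Sum>a\<in>UNIV. if a = 1
            then 2^n * (psi (lam * a ^ (2 ^ k + 1)) * \<i> ^ wt n \<alpha> a) * 2^n else 0)"
      unfolding psi_sum ne by (intro sum.cong refl) simp
    also have "\<dots> = 2^n * (psi (lam * 1 ^ (2 ^ k + 1)) * \<i> ^ wt n \<alpha> 1) * 2^n"
      by simp
    finally have "(\<Sum>\<mu>\<in>UNIV. P \<mu> * psi (\<mu> * 1)) = 2^n * (psi (lam * 1 ^ (2 ^ k + 1)) * \<i> ^ wt n \<alpha> 1) * 2^n" .
    then have "2^n * (psi (lam * 1 ^ (2 ^ k + 1)) * \<i> ^ wt n \<alpha> 1) * (2::complex)^n = 0" using z by simp
    then show False by simp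
  qed
qed

lemma tr_fixed: assumes "z^(2^k) = (z::'a)" shows "tr n z = 0"
proof -
  have "tr n z = (\<Sum>i<k. z^(2^i)) + (\<Sum>i<k. z^(2^(k+i)))"
    unfolding tr_def nk mult_2 by (rule sum_split_add)
  also have "(\<Sum>i<k. z^(2^(k+i))) = (\<Sum>i<k. z^(2^i))"
    using assms by (simp add: power_add power_mult)
  finally show ?thesis by simp
qed

lemma bent_iff: "bent n (\<lambda>x. tr n (lam * x ^ (2 ^ k + 1))) \<longleftrightarrow> lam + lam^(2^k) \<noteq> (0::'a)"
proof
  assume c0: "lam + lam^(2^k) \<noteq> 0"
  show "bent n (\<lambda>x. tr n (lam * x ^ (2 ^ k + 1)))"
    unfolding bent_def cmod_iff
  proof
    fix \<mu> :: 'a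
    have "(\<Sum>a\<in>UNIV. if (lam + lam^(2^k)) * a^(2^k) = 0
            then 2^n * psi (lam * a ^ (2 ^ k + 1) + \<mu> * a) else 0)
        = (\<Sum>a\<in>UNIV. if a = (0::'a) then (2::complex)^n else 0)"
      by (intro sum.cong refl) (use c0 in \<open>auto simp: zero_power\<close>)
    then show "(\<Sum>x\<in>UNIV. sgn2 (tr n (lam * x ^ (2 ^ k + 1)) + tr n (\<mu> * x))) *
          cnj (\<Sum>x\<in>UNIV. sgn2 (tr n (lam * x ^ (2 ^ k + 1)) + tr n (\<mu> * x))) = 2 ^ n"
      unfolding WW by simp
  qed
next
  assume b: "bent n (\<lambda>x. tr n (lam * x ^ (2 ^ k + 1)))"
  show "lam + lam^(2^k) \<noteq> 0"
  proof
    assume c0: "lam + lam^(2^k) = 0"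
    have ll: "lam^(2^k) = lam" using eq_of_add0[OF c0] by simp
    have g0: "tr n (lam * x ^ (2 ^ k + 1)) = 0" for x
    proof (rule tr_fixed)
      have "(lam * x ^ (2 ^ k + 1))^(2^k) = lam^(2^k) * ((x^(2^k))^(2^k) * x^(2^k))"
        by (simp add: power_mult_distrib power_add)
      also have "\<dots> = lam * x ^ (2 ^ k + 1)" unfolding ll qq by (simp add: power_add mult_ac)
      finally show "(lam * x ^ (2 ^ k + 1))^(2^k) = lam * x ^ (2 ^ k + 1)" .
    qed
    have "cmod (\<Sum>x\<in>UNIV. sgn2 (tr n (lam * x ^ (2 ^ k + 1)) + tr n (0 * x))) = 2 powr (real n / 2)"
      using b unfolding bent_def by blast
    then have "cmod (of_nat (card (UNIV::'a set))) = 2 powr (real n / 2)"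
      unfolding g0 by (simp add: sgn2_def)
    moreover have "cmod (of_nat (card (UNIV::'a set)) :: complex) = (2::real)^n"
      unfolding norm_of_nat card by simp
    moreover have "2 powr (real n / 2) = (2::real)^k" using nk by (simp add: powr_realpow)
    ultimately have e: "(2::real)^(2*k) = 2^k" using nk by simp
    have "(2::real)^k < 2^(2*k)" by (rule power_strict_increasing) (use k1 in auto)
    then show False using e by simp
  qed
qed

end

theorem proposition5:
  fixes lam :: "'a::{field,finite}" and \<alpha> :: "nat \<Rightarrow> 'a" and n k :: nat
  assumes "card (UNIV :: 'a set) = 2 ^ n" and "n = 2 * k" and "k \<ge> 1"
    and "self_dual_basis n \<alpha>"
  shows "(negabent n \<alpha> (\<lambda>x. tr n (lam * x ^ (2 ^ k + 1))) \<longleftrightarrow> lam + lam ^ (2 ^ k) \<noteq> 1)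
       \<and> ((bent n (\<lambda>x. tr n (lam * x ^ (2 ^ k + 1))) \<and> negabent n \<alpha> (\<lambda>x. tr n (lam * x ^ (2 ^ k + 1))))
            \<longleftrightarrow> lam + lam ^ (2 ^ k) \<notin> {0, 1})"
proof -
  interpret sd n k \<alpha> using assms by unfold_locales
  show ?thesis using negabent_iff[of lam] bent_iff[of lam] by blast
qed

end
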